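(* Let $G$ be a finitely generated torsion-free nilpotent group, and suppose $\overline{G}=R_1\times\cdots\times R_m=K_1\times\cdots\times K_m$ are two decompositions of $\overline{G}$ into nontrivial, rationally indecomposable rational subgroups, indexed so that for every $i$: the restriction to $K_i$ of the projection $\alpha_i:\overline{G}\to R_i$ is an isomorphism onto $R_i$ whose inverse is the restriction to $R_i$ of the projection $\beta_i:\overline{G}\to K_i$, and $\overline{G}=R_1\times\cdots\times R_{i-1}\times K_i\times R_{i+1}\times\cdots\times R_m$. Then $K_iZ(\overline{G})=R_iZ(\overline{G})$ for all $i$.
   Context: $\overline{G}$ is the rational closure (Malcev completion) of $G$: a torsion-free nilpotent group containing $G$ in which every element has a unique $n$-th root for each $n\ge1$ and some positive power of every element lies in $G$. A subgroup is rational if closed under taking $n$-th roots for all $n\ge1$; rationally indecomposable means not a direct product of two nontrivial rational subgroups. $Z(\cdot)$ denotes the center. *)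

theory Defs
  imports "HOL-Algebra.Algebra"
begin

definition grp_center :: "('a, 'b) monoid_scheme \<Rightarrow> 'a set" where
  "grp_center H = {z \<in> carrier H. \<forall>x \<in> carrier H. z \<otimes>\<^bsub>H\<^esub> x = x \<otimes>\<^bsub>H\<^esub> z}"

definition grp_commutator :: "('a, 'b) monoid_scheme \<Rightarrow> 'a \<Rightarrow> 'a \<Rightarrow> 'a" where
  "grp_commutator H x y = inv\<^bsub>H\<^esub> x \<otimes>\<^bsub>H\<^esub> inv\<^bsub>H\<^esub> y \<otimes>\<^bsub>H\<^esub> x \<otimes>\<^bsub>H\<^esub> y"

fun lower_central :: "('a, 'b) monoid_scheme \<Rightarrow> nat \<Rightarrow> 'a set" where
  "lower_central H 0 = carrier H"
| "lower_central H (Suc k) =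
     generate H {grp_commutator H x y | x y. x \<in> lower_central H k \<and> y \<in> carrier H}"

definition nilpotent_grp :: "('a, 'b) monoid_scheme \<Rightarrow> bool" where
  "nilpotent_grp H \<longleftrightarrow> group H \<and> (\<exists>c. lower_central H c = {\<one>\<^bsub>H\<^esub>})"

definition torsion_free_grp :: "('a, 'b) monoid_scheme \<Rightarrow> bool" where
  "torsion_free_grp H \<longleftrightarrow>
     (\<forall>x \<in> carrier H. \<forall>n::nat. n \<ge> 1 \<longrightarrow> x [^]\<^bsub>H\<^esub> n = \<one>\<^bsub>H\<^esub> \<longrightarrow> x = \<one>\<^bsub>H\<^esub>)"

definition fin_gen_subgroup :: "'a set \<Rightarrow> ('a, 'b) monoid_scheme \<Rightarrow> bool" where
  "fin_gen_subgroup G H \<longleftrightarrow> (\<exists>S. finite S \<and> S \<subseteq> G \<and> generate H S = G)"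

text \<open>H is the rational closure (Malcev completion) of its subgroup G.\<close>
definition rational_closure_of :: "('a, 'b) monoid_scheme \<Rightarrow> 'a set \<Rightarrow> bool" where
  "rational_closure_of H G \<longleftrightarrow>
     nilpotent_grp H \<and> torsion_free_grp H \<and> subgroup G H \<and>
     (\<forall>x \<in> carrier H. \<forall>n::nat. n \<ge> 1 \<longrightarrow> (\<exists>!y. y \<in> carrier H \<and> y [^]\<^bsub>H\<^esub> n = x)) \<and>
     (\<forall>x \<in> carrier H. \<exists>n::nat. n \<ge> 1 \<and> x [^]\<^bsub>H\<^esub> n \<in> G)"

definition rational_subgroup :: "'a set \<Rightarrow> ('a, 'b) monoid_scheme \<Rightarrow> bool" where
  "rational_subgroup A H \<longleftrightarrow> subgroup A H \<and>
     (\<forall>x \<in> carrier H. \<forall>n::nat. n \<ge> 1 \<longrightarrow> x [^]\<^bsub>H\<^esub> n \<in> A \<longrightarrow> x \<in> A)"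

fun prodl :: "('a, 'b) monoid_scheme \<Rightarrow> (nat \<Rightarrow> 'a) \<Rightarrow> nat \<Rightarrow> 'a" where
  "prodl H f 0 = \<one>\<^bsub>H\<^esub>"
| "prodl H f (Suc n) = prodl H f n \<otimes>\<^bsub>H\<^esub> f n"

definition int_dprod :: "('a, 'b) monoid_scheme \<Rightarrow> (nat \<Rightarrow> 'a set) \<Rightarrow> nat \<Rightarrow> bool" where
  "int_dprod H R m \<longleftrightarrow>
     (\<forall>i < m. subgroup (R i) H) \<and>
     (\<forall>i < m. \<forall>j < m. i \<noteq> j \<longrightarrow> (\<forall>x \<in> R i. \<forall>y \<in> R j. x \<otimes>\<^bsub>H\<^esub> y = y \<otimes>\<^bsub>H\<^esub> x)) \<and>
     bij_betw (\<lambda>f. prodl H f m) (Pi\<^sub>E {..<m} R) (carrier H)"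

definition dprod_proj :: "('a, 'b) monoid_scheme \<Rightarrow> (nat \<Rightarrow> 'a set) \<Rightarrow> nat \<Rightarrow> nat \<Rightarrow> 'a \<Rightarrow> 'a" where
  "dprod_proj H R m i x = (THE f. f \<in> Pi\<^sub>E {..<m} R \<and> prodl H f m = x) i"

definition rationally_indecomposable :: "'a set \<Rightarrow> ('a, 'b) monoid_scheme \<Rightarrow> bool" where
  "rationally_indecomposable A H \<longleftrightarrow>
     \<not> (\<exists>B C. rational_subgroup B H \<and> rational_subgroup C H \<and>
             B \<noteq> {\<one>\<^bsub>H\<^esub>} \<and> C \<noteq> {\<one>\<^bsub>H\<^esub>} \<and>
             int_dprod (H\<lparr>carrier := A\<rparr>) (\<lambda>k. if k = 0 then B else C) 2)"

end

theory Submission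
  imports Defs
begin

context group
begin

lemma prodl_carrier: "\<forall>j<n. f j \<in> carrier G \<Longrightarrow> prodl G f n \<in> carrier G"
  by (induction n) auto

lemma prodl_cong: "\<forall>j<n. f j = g j \<Longrightarrow> prodl G f n = prodl G g n"
  by (induction n) auto

lemma comm_prodl:
  assumes "a \<in> carrier G" "\<forall>j<n. f j \<in> carrier G \<and> a \<otimes> f j = f j \<otimes> a"
  shows "a \<otimes> prodl G f n = prodl G f n \<otimes> a"
  using assms(2)
proof (induction n)
  case 0 then show ?case using assms(1) by simp
next
  case (Suc n)
  have c: "prodl G f n \<in> carrier G" using Suc.prems by (intro prodl_carrier) auto
  have fn: "f n \<in> carrier G" "a \<otimes> f n = f n \<otimes> a" using Suc.prems by auto
  have ih: "a \<otimes> prodl G f n = prodl G f n \<otimes> a" using Suc by auto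
  have "a \<otimes> prodl G f (Suc n) = (a \<otimes> prodl G f n) \<otimes> f n"
    using c fn assms(1) by (simp add: m_assoc)
  also have "\<dots> = prodl G f n \<otimes> (a \<otimes> f n)" using ih c fn assms(1) by (simp add: m_assoc)
  also have "\<dots> = prodl G f (Suc n) \<otimes> a" using c fn assms(1) by (simp add: m_assoc)
  finally show ?case .
qed

lemma prodl_pull:
  assumes "i < n" "\<forall>j<n. f j \<in> carrier G"
    "\<forall>j<n. j \<noteq> i \<longrightarrow> f i \<otimes> f j = f j \<otimes> f i"
  shows "prodl G f n = f i \<otimes> prodl G (f(i := \<one>)) n"
  using assms
proof (induction n)
  case 0 then show ?case by simp
next
  case (Suc n)
  have c: "prodl G f n \<in> carrier G" using Suc.prems by (intro prodl_carrier) auto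
  show ?case
  proof (cases "i = n")
    case True
    have e: "prodl G (f(i := \<one>)) n = prodl G f n" using True by (intro prodl_cong) auto
    have cm: "f n \<otimes> prodl G f n = prodl G f n \<otimes> f n"
      using Suc.prems True by (intro comm_prodl) auto
    have X: "prodl G (f(i := \<one>)) (Suc n) = prodl G f n"
    proof -
      have "prodl G (f(i := \<one>)) (Suc n) = prodl G (f(i := \<one>)) n \<otimes> (f(i := \<one>)) n"
        by (rule prodl.simps(2))
      also have "\<dots> = prodl G f n \<otimes> \<one>" unfolding True fun_upd_same e[unfolded True] by (rule refl)
      finally show ?thesis using c by simp
    qed
    have "prodl G f (Suc n) = f n \<otimes> prodl G f n" using cm by simp
    then show ?thesis unfolding True X[unfolded True] .
  next
    case False
    have i: "i < n" using False Suc.prems by auto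
    have ih: "prodl G f n = f i \<otimes> prodl G (f(i := \<one>)) n" by (rule Suc.IH) (use i Suc.prems in auto)
    have c2: "prodl G (f(i := \<one>)) n \<in> carrier G" using Suc.prems by (intro prodl_carrier) auto
    have "prodl G f (Suc n) = (f i \<otimes> prodl G (f(i := \<one>)) n) \<otimes> f n" using ih by simp
    also have "\<dots> = f i \<otimes> prodl G (f(i := \<one>)) (Suc n)"
      using False c2 Suc.prems i by (simp add: m_assoc)
    finally show ?thesis .
  qed
qed

lemma inv_commute:
  assumes a: "a \<in> carrier G" and b: "b \<in> carrier G" and ab: "a \<otimes> b = b \<otimes> a"
  shows "inv a \<otimes> b = b \<otimes> inv a"
proof -
  have ia: "inv a \<in> carrier G" using a by simp
  have "inv a \<otimes> b = inv a \<otimes> (b \<otimes> (a \<otimes> inv a))" using a b by simp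
  also have "\<dots> = inv a \<otimes> ((b \<otimes> a) \<otimes> inv a)" using a b ia by (simp only: m_assoc)
  also have "\<dots> = inv a \<otimes> ((a \<otimes> b) \<otimes> inv a)" using ab by simp
  also have "\<dots> = (inv a \<otimes> a) \<otimes> (b \<otimes> inv a)" using a b ia by (simp only: m_assoc m_closed)
  also have "\<dots> = b \<otimes> inv a" using a b ia by simp
  finally show ?thesis .
qed

lemma center_mult:
  assumes A: "a \<in> grp_center G" and B: "b \<in> grp_center G"
  shows "a \<otimes> b \<in> grp_center G"
proof -
  have a: "a \<in> carrier G" "\<And>x. x \<in> carrier G \<Longrightarrow> a \<otimes> x = x \<otimes> a" using A unfolding grp_center_def by auto
  have b: "b \<in> carrier G" "\<And>x. x \<in> carrier G \<Longrightarrow> b \<otimes> x = x \<otimes> b" using B unfolding grp_center_def by auto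
  have "(a \<otimes> b) \<otimes> x = x \<otimes> (a \<otimes> b)" if x: "x \<in> carrier G" for x
  proof -
    have "(a \<otimes> b) \<otimes> x = a \<otimes> (b \<otimes> x)" using a(1) b(1) x by (simp only: m_assoc)
    also have "\<dots> = a \<otimes> (x \<otimes> b)" using b(2)[OF x] by simp
    also have "\<dots> = (a \<otimes> x) \<otimes> b" using a(1) b(1) x by (simp only: m_assoc)
    also have "\<dots> = (x \<otimes> a) \<otimes> b" using a(2)[OF x] by simp
    also have "\<dots> = x \<otimes> (a \<otimes> b)" using a(1) b(1) x by (simp only: m_assoc)
    finally show ?thesis .
  qed
  moreover have "a \<otimes> b \<in> carrier G" using a(1) b(1) by simp
  ultimately show ?thesis unfolding grp_center_def by blast
qed

lemma decomp_central:
  assumes D: "int_dprod G S m" and im: "i < m" and t: "t \<in> carrier G"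
    and T: "\<forall>j<m. j \<noteq> i \<longrightarrow> (\<forall>y\<in>S j. t \<otimes> y = y \<otimes> t)"
  shows "\<exists>a\<in>S i. \<exists>c\<in>grp_center G. t = a \<otimes> c"
proof -
  have sub: "\<And>j. j < m \<Longrightarrow> S j \<subseteq> carrier G"
    using D unfolding int_dprod_def by (auto dest: subgroup.subset)
  have comm: "\<And>j k x y. j < m \<Longrightarrow> k < m \<Longrightarrow> j \<noteq> k \<Longrightarrow> x \<in> S j \<Longrightarrow> y \<in> S k \<Longrightarrow> x \<otimes> y = y \<otimes> x"
    using D unfolding int_dprod_def by blast
  have bij: "bij_betw (\<lambda>f. prodl G f m) (Pi\<^sub>E {..<m} S) (carrier G)"
    using D unfolding int_dprod_def by blast
  have surj: "\<And>x. x \<in> carrier G \<Longrightarrow> \<exists>f\<in>Pi\<^sub>E {..<m} S. prodl G f m = x"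
    using bij_betw_imp_surj_on[OF bij] by (metis imageE)
  obtain f where f: "f \<in> Pi\<^sub>E {..<m} S" "prodl G f m = t" using surj[OF t] by blast
  have fS: "\<And>j. j < m \<Longrightarrow> f j \<in> S j" using f(1) by auto
  have fc: "\<forall>j<m. f j \<in> carrier G" using fS sub by blast
  have fic: "f i \<in> carrier G" using fc im by blast
  define c where "c = prodl G (f(i := \<one>)) m"
  have cc: "c \<in> carrier G" unfolding c_def using fc by (intro prodl_carrier) auto
  have tc: "t = f i \<otimes> c" unfolding c_def f(2)[symmetric]
    using im fc by (intro prodl_pull) (auto intro: comm fS)
  have cdef2: "c = inv (f i) \<otimes> t" using tc fic cc by (simp add: m_assoc[symmetric])
  have ccomm: "c \<otimes> y = y \<otimes> c" if j: "j < m" "y \<in> S j" for j y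
  proof (cases "j = i")
    case True
    have yc: "y \<in> carrier G" using sub j by blast
    have "y \<otimes> c = c \<otimes> y" unfolding c_def
      using fc j True yc by (intro comm_prodl) (auto intro: comm fS)
    then show ?thesis by simp
  next
    case False
    have yc: "y \<in> carrier G" using sub j by blast
    have a: "inv (f i) \<otimes> y = y \<otimes> inv (f i)"
      using False j im fic yc by (intro inv_commute) (auto intro: comm fS)
    have b: "t \<otimes> y = y \<otimes> t" using T j False by blast
    have "c \<otimes> y = inv (f i) \<otimes> (t \<otimes> y)" using cdef2 fic t yc by (simp add: m_assoc)
    also have "\<dots> = (inv (f i) \<otimes> y) \<otimes> t" using b fic t yc by (simp add: m_assoc)
    also have "\<dots> = y \<otimes> c" using a cdef2 fic t yc by (simp add: m_assoc)
    finally show ?thesis .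
  qed
  have "c \<in> grp_center G"
    unfolding grp_center_def
  proof (intro CollectI conjI ballI cc)
    fix x assume x: "x \<in> carrier G"
    obtain g where g: "g \<in> Pi\<^sub>E {..<m} S" "prodl G g m = x" using surj[OF x] by blast
    have gS: "\<And>j. j < m \<Longrightarrow> g j \<in> S j" using g(1) by auto
    have "c \<otimes> prodl G g m = prodl G g m \<otimes> c"
      using gS cc sub ccomm by (intro comm_prodl) blast+
    then show "c \<otimes> x = x \<otimes> c" using g(2) by simp
  qed
  then show ?thesis using tc fS im by blast
qed

end

theorem mainTheorem9:
  fixes H :: "('a, 'b) monoid_scheme" and G :: "'a set"
    and R K :: "nat \<Rightarrow> 'a set" and m :: nat
  assumes "group H"
    and "subgroup G H"
    and "fin_gen_subgroup G H"
    and "nilpotent_grp (H\<lparr>carrier := G\<rparr>)"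
    and "torsion_free_grp (H\<lparr>carrier := G\<rparr>)"
    and "rational_closure_of H G"
    and "int_dprod H R m"
    and "int_dprod H K m"
    and "\<forall>i < m. rational_subgroup (R i) H \<and> R i \<noteq> {\<one>\<^bsub>H\<^esub>} \<and> rationally_indecomposable (R i) H"
    and "\<forall>i < m. rational_subgroup (K i) H \<and> K i \<noteq> {\<one>\<^bsub>H\<^esub>} \<and> rationally_indecomposable (K i) H"
    and "\<forall>i < m. dprod_proj H R m i \<in> iso (H\<lparr>carrier := K i\<rparr>) (H\<lparr>carrier := R i\<rparr>)"
    and "\<forall>i < m. \<forall>y \<in> R i. dprod_proj H K m i y \<in> K i \<and>
                             dprod_proj H R m i (dprod_proj H K m i y) = y"
    and "\<forall>i < m. \<forall>x \<in> K i. dprod_proj H K m i (dprod_proj H R m i x) = x"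
    and "\<forall>i < m. int_dprod H (R(i := K i)) m"
  shows "\<forall>i < m. K i <#>\<^bsub>H\<^esub> grp_center H = R i <#>\<^bsub>H\<^esub> grp_center H"
proof (intro allI impI)
  fix i assume im: "i < m"
  interpret group H by fact
  have DR: "int_dprod H R m" by fact
  have DK: "int_dprod H (R(i := K i)) m" using assms(14) im by blast
  have subR: "R j \<subseteq> carrier H" if "j < m" for j
    using DR that unfolding int_dprod_def by (auto dest: subgroup.subset)
  have subK: "K i \<subseteq> carrier H"
    using DK im unfolding int_dprod_def by (auto dest!: subgroup.subset spec[of _ i])
  have commR: "\<And>j k x y. j < m \<Longrightarrow> k < m \<Longrightarrow> j \<noteq> k \<Longrightarrow> x \<in> R j \<Longrightarrow> y \<in> R k \<Longrightarrow> x \<otimes>\<^bsub>H\<^esub> y = y \<otimes>\<^bsub>H\<^esub> x"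
    using DR unfolding int_dprod_def by blast
  have commK: "\<And>j k x y. j < m \<Longrightarrow> k < m \<Longrightarrow> j \<noteq> k \<Longrightarrow> x \<in> (R(i := K i)) j \<Longrightarrow> y \<in> (R(i := K i)) k \<Longrightarrow> x \<otimes>\<^bsub>H\<^esub> y = y \<otimes>\<^bsub>H\<^esub> x"
    using DK unfolding int_dprod_def by blast
  have KR: "\<exists>a\<in>R i. \<exists>c\<in>grp_center H. x = a \<otimes>\<^bsub>H\<^esub> c" if x: "x \<in> K i" for x
  proof (rule decomp_central[OF DR im])
    show "x \<in> carrier H" using x subK by blast
    show "\<forall>j<m. j \<noteq> i \<longrightarrow> (\<forall>y\<in>R j. x \<otimes>\<^bsub>H\<^esub> y = y \<otimes>\<^bsub>H\<^esub> x)"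
      using commK[of i] x im by auto
  qed
  have RK: "\<exists>a\<in>K i. \<exists>c\<in>grp_center H. x = a \<otimes>\<^bsub>H\<^esub> c" if x: "x \<in> R i" for x
  proof -
    have "\<exists>a\<in>(R(i := K i)) i. \<exists>c\<in>grp_center H. x = a \<otimes>\<^bsub>H\<^esub> c"
    proof (rule decomp_central[OF DK im])
      show "x \<in> carrier H" using x subR im by blast
      show "\<forall>j<m. j \<noteq> i \<longrightarrow> (\<forall>y\<in>(R(i := K i)) j. x \<otimes>\<^bsub>H\<^esub> y = y \<otimes>\<^bsub>H\<^esub> x)"
        using commR[of i] x im by auto
    qed
    then show ?thesis by simp
  qed
  have zc: "grp_center H \<subseteq> carrier H" unfolding grp_center_def by blast
  show "K i <#>\<^bsub>H\<^esub> grp_center H = R i <#>\<^bsub>H\<^esub> grp_center H"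
  proof
    show "K i <#>\<^bsub>H\<^esub> grp_center H \<subseteq> R i <#>\<^bsub>H\<^esub> grp_center H"
    proof
      fix x assume "x \<in> K i <#>\<^bsub>H\<^esub> grp_center H"
      then obtain k z where kz: "k \<in> K i" "z \<in> grp_center H" "x = k \<otimes>\<^bsub>H\<^esub> z"
        unfolding set_mult_def by blast
      obtain a c where ac: "a \<in> R i" "c \<in> grp_center H" "k = a \<otimes>\<^bsub>H\<^esub> c" using KR[OF kz(1)] by blast
      have "a \<in> carrier H" "c \<in> carrier H" "z \<in> carrier H" using kz ac subR[OF im] zc by auto
      then have "x = a \<otimes>\<^bsub>H\<^esub> (c \<otimes>\<^bsub>H\<^esub> z)" using kz ac by (simp add: m_assoc)
      moreover have "c \<otimes>\<^bsub>H\<^esub> z \<in> grp_center H" by (rule center_mult[OF ac(2) kz(2)])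
      ultimately show "x \<in> R i <#>\<^bsub>H\<^esub> grp_center H" using ac unfolding set_mult_def by blast
    qed
    show "R i <#>\<^bsub>H\<^esub> grp_center H \<subseteq> K i <#>\<^bsub>H\<^esub> grp_center H"
    proof
      fix x assume "x \<in> R i <#>\<^bsub>H\<^esub> grp_center H"
      then obtain k z where kz: "k \<in> R i" "z \<in> grp_center H" "x = k \<otimes>\<^bsub>H\<^esub> z"
        unfolding set_mult_def by blast
      obtain a c where ac: "a \<in> K i" "c \<in> grp_center H" "k = a \<otimes>\<^bsub>H\<^esub> c" using RK[OF kz(1)] by blast
      have "a \<in> carrier H" "c \<in> carrier H" "z \<in> carrier H" using kz ac subK zc by auto
      then have "x = a \<otimes>\<^bsub>H\<^esub> (c \<otimes>\<^bsub>H\<^esub> z)" using kz ac by (simp add: m_assoc)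
      moreover have "c \<otimes>\<^bsub>H\<^esub> z \<in> grp_center H" by (rule center_mult[OF ac(2) kz(2)])
      ultimately show "x \<in> K i <#>\<^bsub>H\<^esub> grp_center H" using ac unfolding set_mult_def by blast
    qed
  qed
qed

end
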